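(* Let $K>3$, $V\ge1$, let $\phi_1,\dots,\phi_K\in\Delta_{V-1}$ have strictly positive entries, $p\in\Delta_{V-1}$, and $H(\theta)=\sum_{v=1}^Vp_v\log\big(\sum_{k=1}^K\theta_k\phi_k(v)\big)$. Let $\theta^*$ be a maximizer of $H$ on $\Delta_{K-1}$ with all coordinates strictly positive. Assume (B1): for every $v$, $\max_k\phi_k(v)$ is attained at a unique index $k(v)$; and that $\phi$ is $\varepsilon$-sparse with $\varepsilon<\varepsilon_0$. Then $$\rho^2:=\frac{|\det Q|^{1/2}|\det R|^{1/2}}{\left|\det\!\left(\frac{Q+R}{2}\right)\right|}\ \ge\ \exp(-C^2\varepsilon^2),$$ where $Q=\nabla^2H(\theta^* )$, $R=-\mathrm{diag}(1/\theta^*_1,\dots,1/\theta^*_K)$, and $C>0$ is a constant depending only on $\theta^*$, $K$ and $\varepsilon_0$.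
   Context: $\Delta_{d-1}=\{x\in\mathbb{R}^d:x_i\ge0,\sum_ix_i=1\}$. $\phi$ is $\varepsilon$-sparse if $\varepsilon=\max_v\frac{\sum_{j\ne k(v)}\phi_j(v)}{\phi_{k(v)}(v)}$. Let $\theta^*_{\min}=\min_k\theta^*_k$, $\theta^*_{\max}=\max_k\theta^*_k$, $C^{(1)}_{\max}=(\theta^*_{\max})^{1/2}/(\theta^*_{\min})^{3/2}$, $C^{(2)}_{\max}=\theta^*_{\max}/(\theta^*_{\min})^2$, and $F(\varepsilon)=4(C^{(2)}_{\max})^2K+K(K-1)\big(2C^{(1)}_{\max}+C^{(2)}_{\max}\varepsilon\big)^2$. The function $\varepsilon\mapsto\varepsilon\sqrt{F(\varepsilon)}$ is strictly increasing on $(0,\infty)$ and vanishes at $0$; $\varepsilon_0>0$ is the unique root of $\varepsilon\sqrt{F(\varepsilon)}=1/2$. *)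

theory Defs
  imports "HOL-Analysis.Analysis"
begin

text \<open>Probability simplex indexed by a finite type (the parameter space, K = CARD('k)).\<close>
definition simplexK :: "(real^'k) set" where
  "simplexK = {th. (\<forall>k. th $ k \<ge> 0) \<and> (\<Sum>k\<in>UNIV. th $ k) = 1}"

definition prob_vec :: "nat \<Rightarrow> (nat \<Rightarrow> real) \<Rightarrow> bool" where
  "prob_vec V x \<longleftrightarrow> (\<forall>v<V. x v \<ge> 0) \<and> (\<Sum>v<V. x v) = 1"

definition Hobj :: "nat \<Rightarrow> (nat \<Rightarrow> real) \<Rightarrow> ('k::finite \<Rightarrow> nat \<Rightarrow> real) \<Rightarrow> real^'k \<Rightarrow> real" where
  "Hobj V p phi th = (\<Sum>v<V. p v * ln (\<Sum>k\<in>UNIV. th $ k * phi k v))"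

definition hessian :: "(real^'n \<Rightarrow> real) \<Rightarrow> real^'n \<Rightarrow> real^'n^'n" where
  "hessian f x = (\<chi> i j. deriv (\<lambda>s. deriv (\<lambda>t. f (x + s *\<^sub>R axis i 1 + t *\<^sub>R axis j 1)) 0) 0)"

definition B1 :: "nat \<Rightarrow> ('k \<Rightarrow> nat \<Rightarrow> real) \<Rightarrow> bool" where
  "B1 V phi \<longleftrightarrow> (\<forall>v<V. \<exists>!k. \<forall>j. phi j v \<le> phi k v)"

definition kmax :: "('k \<Rightarrow> nat \<Rightarrow> real) \<Rightarrow> nat \<Rightarrow> 'k" where
  "kmax phi v = (THE k. \<forall>j. phi j v \<le> phi k v)"

definition sparsity :: "nat \<Rightarrow> ('k::finite \<Rightarrow> nat \<Rightarrow> real) \<Rightarrow> real" where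
  "sparsity V phi = Max ((\<lambda>v. (\<Sum>j\<in>UNIV - {kmax phi v}. phi j v) / phi (kmax phi v) v) ` {..<V})"

definition C1max :: "real^'k \<Rightarrow> real" where
  "C1max th = sqrt (Max (range (($) th))) / (Min (range (($) th))) powr (3/2)"

definition C2max :: "real^'k \<Rightarrow> real" where
  "C2max th = Max (range (($) th)) / (Min (range (($) th)))^2"

definition Ffun :: "real^'k \<Rightarrow> real \<Rightarrow> real" where
  "Ffun th e = 4 * (C2max th)^2 * real CARD('k)
     + real CARD('k) * (real CARD('k) - 1) * (2 * C1max th + C2max th * e)^2"

definition eps0 :: "real^'k \<Rightarrow> real" where
  "eps0 th = (THE e. e > 0 \<and> e * sqrt (Ffun th e) = 1/2)"

definition Rmat :: "real^'k \<Rightarrow> real^'k^'k" where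
  "Rmat th = (\<chi> i j. if i = j then - 1 / th $ i else 0)"

definition rho2 :: "real^'k^'k \<Rightarrow> real^'k^'k \<Rightarrow> real" where
  "rho2 Q R = sqrt \<bar>det Q\<bar> * sqrt \<bar>det R\<bar> / \<bar>det ((1/2) *\<^sub>R (Q + R))\<bar>"

end

theory Submission
  imports Defs "HOL-Computational_Algebra.Fundamental_Theorem_Algebra"
begin

lemma poly_det: fixes A :: "'a::comm_ring_1 poly^'n^'n"
  shows "poly (det A) x = det (\<chi> i j. poly (A$i$j) x)"
  unfolding det_def by (simp add: poly_sum poly_prod)

lemma det_of_real: fixes A :: "real^'n^'n"
  shows "det (\<chi> i j. (of_real (A$i$j) :: complex)) = of_real (det A)"
  unfolding det_def by (simp add: of_real_sum of_real_prod)

lemma cs_double: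
  fixes E :: "'n::finite \<Rightarrow> 'n \<Rightarrow> real" and a :: "'n \<Rightarrow> real"
  shows "(\<Sum>i\<in>UNIV. \<Sum>j\<in>UNIV. \<bar>E i j\<bar> * (a i * a j)) \<le> sqrt (\<Sum>i\<in>UNIV. \<Sum>j\<in>UNIV. (E i j)^2) * (\<Sum>i\<in>UNIV. (a i)^2)"
proof -
  let ?I = "UNIV \<times> (UNIV::'n set)"
  have 1: "(\<Sum>i\<in>UNIV. \<Sum>j\<in>UNIV. \<bar>E i j\<bar> * (a i * a j)) = (\<Sum>x\<in>?I. \<bar>E (fst x) (snd x)\<bar> * (a (fst x) * a (snd x)))"
    by (simp add: sum.cartesian_product case_prod_unfold)
  have 2: "(\<Sum>i\<in>UNIV. \<Sum>j\<in>UNIV. (E i j)^2) = (\<Sum>x\<in>?I. (\<bar>E (fst x) (snd x)\<bar>)^2)"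
    by (simp add: sum.cartesian_product case_prod_unfold)
  have 3: "(\<Sum>x\<in>?I. (a (fst x) * a (snd x))^2) = (\<Sum>i\<in>UNIV. (a i)^2)^2"
  proof -
    have "(\<Sum>i\<in>UNIV. (a i)^2)^2 = (\<Sum>i\<in>UNIV. (a i)^2) * (\<Sum>j\<in>UNIV. (a j)^2)"
      by (simp add: power2_eq_square)
    also have "\<dots> = (\<Sum>i\<in>UNIV. \<Sum>j\<in>UNIV. (a i)^2 * (a j)^2)"
      by (rule sum_product)
    also have "\<dots> = (\<Sum>x\<in>?I. (a (fst x))^2 * (a (snd x))^2)"
      by (simp add: sum.cartesian_product case_prod_unfold)
    finally show ?thesis by (simp add: power_mult_distrib)
  qed
  have CS: "(\<Sum>x\<in>?I. \<bar>E (fst x) (snd x)\<bar> * (a (fst x) * a (snd x)))^2 \<le> (\<Sum>x\<in>?I. (\<bar>E (fst x) (snd x)\<bar>)^2) * (\<Sum>x\<in>?I. (a (fst x) * a (snd x))^2)"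
    by (rule Cauchy_Schwarz_ineq_sum)
  define X where "X = (\<Sum>x\<in>?I. \<bar>E (fst x) (snd x)\<bar> * (a (fst x) * a (snd x)))"
  define Y where "Y = (\<Sum>x\<in>?I. (\<bar>E (fst x) (snd x)\<bar>)^2)"
  define S where "S = (\<Sum>i\<in>UNIV. (a i)^2)"
  have Y0: "Y \<ge> 0" unfolding Y_def by (rule sum_nonneg) simp
  have S0: "S \<ge> 0" unfolding S_def by (rule sum_nonneg) simp
  have "X^2 \<le> Y * S^2" using CS unfolding X_def Y_def S_def 3 .
  hence "sqrt (X^2) \<le> sqrt (Y * S^2)" by (rule real_sqrt_le_mono)
  hence "\<bar>X\<bar> \<le> sqrt Y * S" using S0 by (simp add: real_sqrt_mult)
  thus ?thesis unfolding 1 2 X_def[symmetric] Y_def[symmetric] S_def[symmetric] by linarith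
qed

lemma sym_root:
  fixes E :: "real^'n^'n" and z :: complex
  assumes sym: "\<And>i j. E$i$j = E$j$i"
    and dz: "det ((\<chi> i j. (if i = j then 1 else 0) + z * complex_of_real (E$i$j)) :: complex^'n^'n) = 0"
  shows "z \<noteq> 0 \<and> Im z = 0 \<and> \<bar>Re (1/z)\<bar> \<le> sqrt (\<Sum>i\<in>UNIV. \<Sum>j\<in>UNIV. (E$i$j)^2)"
proof -
  let ?A = "(\<chi> i j. (if i = j then 1 else 0) + z * complex_of_real (E$i$j)) :: complex^'n^'n"
  have "\<not> invertible ?A" using dz invertible_det_nz by auto
  hence "\<not>(\<exists>B. B ** ?A = mat 1)" using invertible_left_inverse by blast
  then obtain x where x: "?A *v x = 0" "x \<noteq> 0" using matrix_left_invertible_ker by blast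
  have row: "x$i + z * (\<Sum>j\<in>UNIV. of_real(E$i$j) * x$j) = 0" for i
  proof -
    have "0 = (?A *v x)$i" using x(1) by simp
    also have "\<dots> = (\<Sum>j\<in>UNIV. ((if i = j then 1 else 0) + z * complex_of_real (E$i$j)) * x$j)"
      by (simp add: matrix_vector_mult_def)
    also have "\<dots> = (\<Sum>j\<in>UNIV. (if i = j then x$j else 0)) + (\<Sum>j\<in>UNIV. z * (complex_of_real (E$i$j) * x$j))"
      unfolding sum.distrib[symmetric] by (rule sum.cong) (auto simp: distrib_right)
    also have "\<dots> = x$i + z * (\<Sum>j\<in>UNIV. of_real(E$i$j) * x$j)"
      by (simp add: sum_distrib_left)
    finally show ?thesis by simp
  qed
  define s where "s = (\<Sum>i\<in>UNIV. cnj (x$i) * x$i)"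
  define q where "q = (\<Sum>i\<in>UNIV. cnj (x$i) * (\<Sum>j\<in>UNIV. of_real(E$i$j) * x$j))"
  have "s + z*q = (\<Sum>i\<in>UNIV. cnj (x$i) * (x$i + z * (\<Sum>j\<in>UNIV. of_real(E$i$j) * x$j)))"
    by (simp add: s_def q_def sum.distrib sum_distrib_left distrib_left mult.left_commute)
  also have "\<dots> = 0" by (simp add: row)
  finally have sq: "s + z*q = 0" .
  define S where "S = (\<Sum>i\<in>UNIV. (cmod (x$i))^2)"
  have sS: "s = of_real S"
    unfolding s_def S_def of_real_sum
    by (rule sum.cong) (auto simp: complex_norm_square[symmetric] mult.commute)
  obtain i0 where i0: "x$i0 \<noteq> 0" using x(2) by (metis vec_eq_iff zero_index)
  have "(cmod (x$i0))^2 \<le> S" unfolding S_def by (rule member_le_sum) auto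
  moreover have "(cmod (x$i0))^2 > 0" using i0 by simp
  ultimately have S0: "S > 0" by linarith
  have "cnj q = (\<Sum>i\<in>UNIV. \<Sum>j\<in>UNIV. of_real(E$i$j) * (x$i * cnj (x$j)))"
    by (simp add: q_def sum_distrib_left mult.left_commute mult.commute)
  also have "\<dots> = (\<Sum>j\<in>UNIV. \<Sum>i\<in>UNIV. of_real(E$i$j) * (x$i * cnj (x$j)))"
    by (rule sum.swap)
  also have "\<dots> = q"
    by (simp add: q_def sum_distrib_left mult.left_commute mult.commute sym)
  finally have cq: "cnj q = q" .
  hence Imq: "Im q = 0" by (metis cnj.simps(2) complex_cnj_cancel_iff equation_minus_iff complex_eq_iff neg_equal_zero)
  have q0: "q \<noteq> 0" using sq sS S0 by auto
  have zq: "z = - s / q" using sq q0 by (simp add: eq_neg_iff_add_eq_0 field_simps)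
  have z0: "z \<noteq> 0" using zq sS S0 q0 by auto
  have qr: "q = of_real (Re q)" using Imq by (simp add: complex_eq_iff)
  have Imz: "Im z = 0" using zq sS qr by (metis Im_complex_of_real of_real_divide of_real_minus)
  have iz: "1/z = - q / s" using zq q0 sS S0 by simp
  hence Reiz: "Re (1/z) = - Re q / S" using sS by (simp add: Re_divide_of_real)
  have "cmod q \<le> (\<Sum>i\<in>UNIV. cmod (cnj (x$i) * (\<Sum>j\<in>UNIV. of_real(E$i$j) * x$j)))"
    unfolding q_def by (rule norm_sum)
  also have "\<dots> \<le> (\<Sum>i\<in>UNIV. \<Sum>j\<in>UNIV. \<bar>E$i$j\<bar> * (cmod (x$i) * cmod (x$j)))"
  proof (rule sum_mono)
    fix i
    have "cmod (\<Sum>j\<in>UNIV. of_real(E$i$j) * x$j) \<le> (\<Sum>j\<in>UNIV. cmod (of_real(E$i$j) * x$j))"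
      by (rule norm_sum)
    also have "\<dots> = (\<Sum>j\<in>UNIV. \<bar>E$i$j\<bar> * cmod (x$j))" by (simp add: norm_mult)
    finally have "cmod (cnj (x$i) * (\<Sum>j\<in>UNIV. of_real(E$i$j) * x$j)) \<le> cmod (x$i) * (\<Sum>j\<in>UNIV. \<bar>E$i$j\<bar> * cmod (x$j))"
      by (simp add: norm_mult mult_left_mono)
    thus "cmod (cnj (x$i) * (\<Sum>j\<in>UNIV. of_real(E$i$j) * x$j)) \<le> (\<Sum>j\<in>UNIV. \<bar>E$i$j\<bar> * (cmod (x$i) * cmod (x$j)))"
      by (simp add: sum_distrib_left mult.left_commute)
  qed
  also have "\<dots> \<le> sqrt (\<Sum>i\<in>UNIV. \<Sum>j\<in>UNIV. (E$i$j)^2) * S"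
    unfolding S_def by (rule cs_double[where E="\<lambda>i j. E$i$j" and a="\<lambda>i. cmod (x$i)", simplified])
  finally have "cmod q \<le> sqrt (\<Sum>i\<in>UNIV. \<Sum>j\<in>UNIV. (E$i$j)^2) * S" .
  moreover have "\<bar>Re q\<bar> \<le> cmod q" by (rule abs_Re_le_cmod)
  ultimately have "\<bar>Re q\<bar> / S \<le> sqrt (\<Sum>i\<in>UNIV. \<Sum>j\<in>UNIV. (E$i$j)^2)"
    using S0 by (simp add: divide_le_eq)
  hence "\<bar>Re (1/z)\<bar> \<le> sqrt (\<Sum>i\<in>UNIV. \<Sum>j\<in>UNIV. (E$i$j)^2)" unfolding Reiz using S0 by simp
  thus ?thesis using z0 Imz by simp
qed

lemma sym_det_factor:
  fixes E :: "real^'n^'n"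
  assumes sym: "\<And>i j. E$i$j = E$j$i"
  shows "\<exists>n \<mu>. n \<le> CARD('n) \<and> (\<forall>i<n. \<bar>\<mu> i\<bar> \<le> sqrt (\<Sum>i\<in>UNIV. \<Sum>j\<in>UNIV. (E$i$j)^2)) \<and>
     (\<forall>t::real. det ((\<chi> i j. (if i = j then 1 else 0) + t * E$i$j) :: real^'n^'n) = (\<Prod>i<n. 1 + t * \<mu> i))"
proof -
  let ?f = "sqrt (\<Sum>i\<in>UNIV. \<Sum>j\<in>UNIV. (E$i$j)^2)"
  define P :: "complex poly" where "P = det ((\<chi> i j. [: if i = j then 1 else 0, complex_of_real (E$i$j) :]) :: complex poly^'n^'n)"
  have evP: "poly P z = det ((\<chi> i j. (if i = j then 1 else 0) + z * complex_of_real (E$i$j)) :: complex^'n^'n)" for z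
    by (simp add: P_def poly_det)
  have "poly P 0 = det (mat 1 :: complex^'n^'n)" unfolding evP by (simp add: mat_def)
  hence P0: "poly P 0 = 1" by simp
  have degP: "degree P \<le> CARD('n)"
  proof -
    have "degree P \<le> CARD('n)" unfolding P_def det_def
    proof (rule degree_sum_le)
      fix p :: "'n \<Rightarrow> 'n"
      have "degree (\<Prod>i\<in>UNIV. ((\<chi> i j. [: if i = j then 1 else 0, complex_of_real (E$i$j) :]) :: complex poly^'n^'n) $ i $ p i) \<le> (\<Sum>i\<in>(UNIV::'n set). 1)"
      proof (rule order_trans[OF degree_prod_sum_le], simp, rule sum_mono)
        fix i
        have "degree (pCons (if i = p i then 1 else 0) [:complex_of_real (E$i$p i):]) \<le> Suc (degree [:complex_of_real (E$i$p i):])"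
          by (rule degree_pCons_le)
        thus "(degree \<circ> (\<lambda>i. ((\<chi> i j. [: if i = j then 1 else 0, complex_of_real (E$i$j) :]) :: complex poly^'n^'n) $ i $ p i)) i \<le> 1"
          by simp
      qed
      thus "degree (of_int (sign p) * (\<Prod>i\<in>UNIV. ((\<chi> i j. [: if i = j then 1 else 0, complex_of_real (E$i$j) :]) :: complex poly^'n^'n) $ i $ p i)) \<le> CARD('n)"
        using degree_mult_le[of "of_int (sign p) :: complex poly" "\<Prod>i\<in>UNIV. ((\<chi> i j. [: if i = j then 1 else 0, complex_of_real (E$i$j) :]) :: complex poly^'n^'n) $ i $ p i"]
        by simp
    qed simp
    thus ?thesis .
  qed
  obtain root where fact: "smult (lead_coeff P) (\<Prod>i<degree P. [:-root i, 1:]) = P"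
    using complex_poly_decompose' by blast
  have evf: "poly P w = lead_coeff P * (\<Prod>i<degree P. w - root i)" for w
    by (subst fact[symmetric]) (simp add: poly_prod)
  have rootP: "poly P (root i) = 0" if "i < degree P" for i
    unfolding evf using that by (auto intro!: prod_zero)
  have rinfo: "root i \<noteq> 0 \<and> Im (root i) = 0 \<and> \<bar>Re (1/root i)\<bar> \<le> ?f" if "i < degree P" for i
    by (rule sym_root[OF sym]) (use rootP[OF that] evP in simp)
  define \<mu> where "\<mu> i = - Re (1 / root i)" for i
  have mu_eq: "complex_of_real (\<mu> i) = - 1 / root i" if "i < degree P" for i
  proof -
    have "Im (1 / root i) = 0" using rinfo[OF that] by (simp add: Im_divide)
    thus ?thesis unfolding \<mu>_def by (simp add: complex_eq_iff)
  qed
  have lc: "lead_coeff P * (\<Prod>i<degree P. - root i) = 1" using evf[of 0] P0 by simp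
  have prodnz: "(\<Prod>i<degree P. - root i) \<noteq> 0" using rinfo by auto
  have evmu: "poly P w = (\<Prod>i<degree P. 1 + w * complex_of_real (\<mu> i))" for w
  proof -
    have "(\<Prod>i<degree P. 1 + w * complex_of_real (\<mu> i)) = (\<Prod>i<degree P. (w - root i) / (- root i))"
      by (rule prod.cong) (use rinfo mu_eq in \<open>auto simp: field_simps\<close>)
    also have "\<dots> = (\<Prod>i<degree P. w - root i) / (\<Prod>i<degree P. - root i)"
      by (rule prod_dividef)
    also have "\<dots> = poly P w" unfolding evf using lc prodnz by (simp add: field_simps)
    finally show ?thesis by simp
  qed
  have main: "det ((\<chi> i j. (if i = j then 1 else 0) + t * E$i$j) :: real^'n^'n) = (\<Prod>i<degree P. 1 + t * \<mu> i)" for t :: real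
  proof -
    have "complex_of_real (det ((\<chi> i j. (if i = j then 1 else 0) + t * E$i$j) :: real^'n^'n))
       = det ((\<chi> i j. complex_of_real (((\<chi> i j. (if i = j then 1 else 0) + t * E$i$j) :: real^'n^'n)$i$j)) :: complex^'n^'n)"
      by (rule det_of_real[symmetric])
    also have "\<dots> = poly P (complex_of_real t)" unfolding evP
      by (rule arg_cong[where f=det]) (simp add: vec_eq_iff)
    also have "\<dots> = complex_of_real (\<Prod>i<degree P. 1 + t * \<mu> i)" unfolding evmu by simp
    finally show ?thesis using of_real_eq_iff by blast
  qed
  show ?thesis
    by (rule exI[of _ "degree P"], rule exI[of _ \<mu>]) (use degP rinfo main in \<open>auto simp: \<mu>_def\<close>)
qed

lemma one_minus_ge_exp: fixes x :: real assumes "0 \<le> x" "x \<le> 1/2" shows "exp (-2*x) \<le> 1 - x"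
proof -
  have "1 + 2*x \<le> exp (2*x)" using exp_ge_add_one_self[of "2*x"] by simp
  hence "exp (-2*x) \<le> 1/(1+2*x)" using assms by (simp add: exp_minus field_simps)
  also have "\<dots> \<le> 1 - x"
  proof -
    have h: "0 \<le> x*(1-2*x)" using assms by simp
    have "1 \<le> (1 - x) * (1 + 2*x)" using h by (simp add: algebra_simps)
    thus ?thesis using assms by (simp add: divide_le_eq)
  qed
  finally show ?thesis .
qed

lemma g_ge: fixes m :: real assumes "\<bar>m\<bar> \<le> 1/2"
  shows "exp (- (m^2)) \<le> sqrt (1 + m) / (1 + m/2)"
proof -
  define x where "x = m^2/(2+m)^2"
  have p: "2 + m \<ge> 3/2" using assms by linarith
  have x0: "0 \<le> x" unfolding x_def by simp
  have "\<bar>m\<bar>^2 \<le> (1/2)^2" by (rule power_mono) (use assms in auto)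
  hence "m^2 \<le> 1/4" by (simp add: power2_eq_square)
  moreover have "(3/2)^2 \<le> (2+m)^2" by (rule power_mono) (use p in auto)
  hence "(2+m)^2 \<ge> 9/4" by (simp add: power2_eq_square)
  ultimately have x1: "x \<le> m^2 / (9/4)" unfolding x_def by (intro divide_left_mono) auto
  hence x2: "x \<le> 1/2" using \<open>m^2 \<le> 1/4\<close> by simp
  have d: "(2+m)^2 \<noteq> 0" using p by simp
  have m1: "1 + m \<ge> 0" using assms by (auto simp: abs_le_iff)
  have "(sqrt (1 + m) / (1 + m/2))^2 = (1+m)/(1+m/2)^2" using m1 by (simp add: power_divide)
  also have "\<dots> = 4*(1+m)/(2+m)^2" by (simp add: power2_eq_square field_simps)
  also have "\<dots> = 1 - x" unfolding x_def using d by (simp add: field_simps power2_eq_square)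
  finally have g2: "(sqrt (1 + m) / (1 + m/2))^2 = 1 - x" .
  have "exp (- (m^2))^2 = exp (-2 * m^2)" by (simp add: power2_eq_square exp_add[symmetric])
  also have "\<dots> \<le> exp (-2*x)"
  proof -
    have "m^2 / (9/4) \<le> m^2" using zero_le_power2[of m] by (simp add: divide_le_eq)
    hence "x \<le> m^2" using x1 by linarith
    thus ?thesis by simp
  qed
  also have "\<dots> \<le> 1 - x" by (rule one_minus_ge_exp[OF x0 x2])
  finally have "exp (- (m^2))^2 \<le> (sqrt (1 + m) / (1 + m/2))^2" using g2 by simp
  moreover have "sqrt (1 + m) / (1 + m/2) \<ge> 0" using assms by simp
  ultimately show ?thesis using power2_le_imp_le by blast
qed

lemma sqrt_prod_lessThan: "sqrt (\<Prod>i<(n::nat). a i) = (\<Prod>i<n. sqrt (a i))"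
  by (induct n) (simp_all add: real_sqrt_mult)

lemma prod_ratio_ge:
  fixes \<mu> :: "nat \<Rightarrow> real" and f :: real
  assumes "\<forall>i<n. \<bar>\<mu> i\<bar> \<le> f" "f \<le> 1/2"
  shows "exp (- (real n * f^2)) \<le> sqrt (\<Prod>i<n. 1 + \<mu> i) / (\<Prod>i<n. 1 + \<mu> i / 2)"
proof -
  have "exp (- (real n * f^2)) \<le> exp (- (\<Sum>i<n. (\<mu> i)^2))"
  proof -
    have "(\<Sum>i<n. (\<mu> i)^2) \<le> (\<Sum>i<n. f^2)"
    proof (rule sum_mono)
      fix i assume "i \<in> {..<n}"
      hence "\<bar>\<mu> i\<bar>^2 \<le> f^2" using assms by (intro power_mono) auto
      thus "(\<mu> i)^2 \<le> f^2" by simp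
    qed
    thus ?thesis by simp
  qed
  also have "\<dots> = (\<Prod>i<n. exp (- ((\<mu> i)^2)))" by (simp add: exp_sum[symmetric] sum_negf)
  also have "\<dots> \<le> (\<Prod>i<n. sqrt (1 + \<mu> i) / (1 + \<mu> i / 2))"
    by (rule prod_mono) (use assms in \<open>auto intro!: g_ge\<close>)
  also have "\<dots> = sqrt (\<Prod>i<n. 1 + \<mu> i) / (\<Prod>i<n. 1 + \<mu> i / 2)"
    by (simp add: prod_dividef sqrt_prod_lessThan)
  finally show ?thesis .
qed

lemma thmin_pos: fixes th :: "real^'k" assumes "\<forall>k. th$k > 0"
  shows "Min (range (($) th)) > 0"
proof -
  have "Min (range (($) th)) \<in> range (($) th)" by (rule Min_in) auto
  thus ?thesis using assms by auto
qed

lemma thmin_le: fixes th :: "real^'k" shows "Min (range (($) th)) \<le> th$k"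
  by (rule Min_le) auto

lemma thmax_ge: fixes th :: "real^'k" shows "th$k \<le> Max (range (($) th))"
  by (rule Max_ge) auto

lemma C12_pos: fixes th :: "real^'k" assumes "\<forall>k. th$k > 0"
  shows "C1max th > 0" "C2max th > 0"
proof -
  have m: "Min (range (($) th)) > 0" by (rule thmin_pos[OF assms])
  obtain k :: 'k where True by auto
  have "Max (range (($) th)) \<ge> th$k" by (rule thmax_ge)
  hence M: "Max (range (($) th)) > 0" using assms by (meson less_le_trans)
  have p: "Min (range (($) th)) powr (3/2) > 0" using m by (metis powr_gt_zero less_irrefl)
  have s: "sqrt (Max (range (($) th))) > 0" using M by simp
  show "C1max th > 0" unfolding C1max_def using divide_pos_pos[OF s p] .
  have q: "(Min (range (($) th)))^2 > 0" using m by (metis zero_less_power)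
  show "C2max th > 0" unfolding C2max_def using divide_pos_pos[OF M q] .
qed

lemma F_mono: fixes th :: "real^'k" assumes "\<forall>k. th$k > 0" "0 \<le> a" "a \<le> b"
  shows "Ffun th a \<le> Ffun th b"
proof -
  have c: "C1max th > 0" "C2max th > 0" using C12_pos[OF assms(1)] by auto
  have "(2 * C1max th + C2max th * a)^2 \<le> (2 * C1max th + C2max th * b)^2"
    by (rule power_mono) (use c assms in \<open>auto intro: mult_left_mono\<close>)
  moreover have "real CARD('k) * (real CARD('k) - 1) \<ge> 0"
    using card_ge_0_finite[of "UNIV::'k set"] by (simp add: Suc_le_eq[symmetric])
  ultimately show ?thesis unfolding Ffun_def by (simp add: mult_left_mono)
qed

lemma K1: "real CARD('k::finite) \<ge> 1"
proof -
  have "0 < CARD('k)" by simp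
  thus ?thesis by linarith
qed

lemma F_pos: fixes th :: "real^'k" assumes "\<forall>k. th$k > 0"
  shows "Ffun th e \<ge> 4 * (C2max th)^2 * real CARD('k)"
proof -
  have "real CARD('k) * (real CARD('k) - 1) \<ge> 0"
    using card_ge_0_finite[of "UNIV::'k set"] by (simp add: Suc_le_eq[symmetric])
  thus ?thesis unfolding Ffun_def by simp
qed

lemma g_strict: fixes th :: "real^'k" assumes "\<forall>k. th$k > 0" "0 \<le> a" "a < b"
  shows "a * sqrt (Ffun th a) < b * sqrt (Ffun th b)"
proof -
  have c: "C2max th > 0" using C12_pos[OF assms(1)] by auto
  have "4 * (C2max th)^2 * real CARD('k) > 0" using c K1[where 'k='k] by simp
  hence Fa: "Ffun th a > 0" using F_pos[OF assms(1), of a] by linarith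
  have "a * sqrt (Ffun th a) < b * sqrt (Ffun th a)" using Fa assms by simp
  also have "\<dots> \<le> b * sqrt (Ffun th b)" using F_mono[OF assms(1), of a b] assms
    by (intro mult_left_mono) auto
  finally show ?thesis .
qed

lemma eps0_prop: fixes th :: "real^'k" assumes "\<forall>k. th$k > 0"
  shows "eps0 th > 0 \<and> eps0 th * sqrt (Ffun th (eps0 th)) = 1/2"
proof -
  let ?g = "\<lambda>e. e * sqrt (Ffun th e)"
  have c: "C2max th > 0" using C12_pos[OF assms(1)] by auto
  define b where "b = 1 / C2max th"
  have b0: "b > 0" using c by (simp add: b_def)
  have "4 * (C2max th)^2 * 1 \<le> 4 * (C2max th)^2 * real CARD('k)"
    using K1[where 'k='k] by (intro mult_left_mono) auto
  hence "Ffun th b \<ge> 4 * (C2max th)^2 * 1" using F_pos[OF assms, of b] by linarith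
  hence "sqrt (Ffun th b) \<ge> sqrt (4 * (C2max th)^2)" by simp
  hence "sqrt (Ffun th b) \<ge> 2 * C2max th" using c by (simp add: real_sqrt_mult)
  hence "b * sqrt (Ffun th b) \<ge> b * (2 * C2max th)" using b0 by (simp add: mult_left_mono)
  moreover have "b * (2 * C2max th) = 2" using c by (simp add: b_def)
  ultimately have gb: "?g b \<ge> 1/2" by linarith
  have cont: "\<forall>x. 0 \<le> x \<and> x \<le> b \<longrightarrow> isCont ?g x"
    unfolding Ffun_def by (auto intro!: continuous_intros)
  obtain e where e: "e \<ge> 0" "e \<le> b" "?g e = 1/2"
    using IVT[of ?g 0 "1/2" b, OF _ gb _ cont] b0 by auto
  have e0: "e > 0" using e by (cases "e = 0") auto
  have ex: "\<exists>!e. e > 0 \<and> ?g e = 1/2"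
  proof (rule ex1I[of _ e])
    show "e > 0 \<and> ?g e = 1/2" using e0 e by auto
    fix y assume y: "y > 0 \<and> ?g y = 1/2"
    show "y = e"
    proof (rule ccontr)
      assume "y \<noteq> e"
      hence "y < e \<or> e < y" by auto
      thus False using g_strict[OF assms, of y e] g_strict[OF assms, of e y] y e e0 by auto
    qed
  qed
  show ?thesis unfolding eps0_def using theI'[OF ex] .
qed

lemma C1_bound: fixes th :: "real^'k" assumes pos: "\<forall>k. th$k > 0"
  shows "sqrt (th$a) * sqrt (th$b) / (th$a)^2 \<le> C1max th"
proof -
  let ?M = "Max (range (($) th))" and ?m = "Min (range (($) th))"
  have m0: "?m > 0" by (rule thmin_pos[OF pos])
  have a0: "th$a > 0" using pos by simp
  have "sqrt (th$a) * sqrt (th$b) / (th$a)^2 = sqrt (th$b) / (th$a powr (3/2))"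
  proof -
    have "th$a powr (3/2) = th$a powr (1 + 1/2)" by simp
    also have "\<dots> = th$a powr 1 * th$a powr (1/2)" by (rule powr_add)
    also have "\<dots> = th$a * sqrt (th$a)" using a0 by (simp add: powr_half_sqrt)
    finally have e: "th$a powr (3/2) = th$a * sqrt (th$a)" .
    show ?thesis unfolding e using a0 by (simp add: power2_eq_square field_simps)
  qed
  also have "\<dots> \<le> sqrt ?M / ?m powr (3/2)"
  proof (rule frac_le)
    show "0 \<le> sqrt ?M" using thmax_ge[of th b] pos by (meson less_le_trans real_sqrt_ge_zero less_imp_le)
    show "sqrt (th$b) \<le> sqrt ?M" using thmax_ge[of th b] by simp
    show "0 < ?m powr (3/2)" using m0 by (metis powr_gt_zero less_irrefl)
    show "?m powr (3/2) \<le> th$a powr (3/2)" using thmin_le[of th a] m0 by (intro powr_mono2) (auto simp: less_imp_le)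
  qed
  finally show ?thesis by (simp add: C1max_def)
qed

lemma C2_ge: fixes th :: "real^'k" assumes pos: "\<forall>k. th$k > 0"
  shows "1 / Min (range (($) th)) \<le> C2max th"
proof -
  let ?M = "Max (range (($) th))" and ?m = "Min (range (($) th))"
  have m0: "?m > 0" by (rule thmin_pos[OF pos])
  obtain k :: 'k where True by auto
  have "?m \<le> ?M" using thmin_le[of th k] thmax_ge[of th k] by linarith
  hence "?m / ?m^2 \<le> ?M / ?m^2" using m0 by (intro divide_right_mono) auto
  thus ?thesis using m0 by (simp add: C2max_def power2_eq_square)
qed

lemma entry_bounds:
  fixes ths :: "real^'k" and phi :: "'k \<Rightarrow> nat \<Rightarrow> real"
  assumes pos: "\<forall>k. ths$k > 0"
    and phipos: "\<forall>k v. v < V \<longrightarrow> phi k v > 0"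
    and pnn: "\<forall>v<V. p v \<ge> 0" and psum: "(\<Sum>v<V. p v) = 1"
    and kkt: "\<And>k. (\<Sum>v<V. p v * (phi k v / (\<Sum>k\<in>UNIV. ths$k * phi k v))) = 1"
    and sp: "\<And>v. v < V \<Longrightarrow> (\<Sum>j\<in>UNIV - {kmax phi v}. phi j v) \<le> e * phi (kmax phi v) v"
    and e0: "e \<ge> 0"
  shows "\<bar>sqrt (ths$i) * sqrt (ths$i) * (\<Sum>v<V. p v * (phi i v * phi i v / (\<Sum>k\<in>UNIV. ths$k * phi k v)^2)) - 1\<bar> \<le> C2max ths * e"
    and "i \<noteq> j \<Longrightarrow> \<bar>sqrt (ths$i) * sqrt (ths$j) * (\<Sum>v<V. p v * (phi j v * phi i v / (\<Sum>k\<in>UNIV. ths$k * phi k v)^2))\<bar> \<le> e * (2 * C1max ths + C2max ths * e)"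
proof -
  define y where "y v = (\<Sum>k\<in>UNIV. ths$k * phi k v)" for v
  define r where "r j v = phi j v / y v" for j v
  define kv where "kv v = kmax phi v" for v
  define tm where "tm = Min (range (($) ths))"
  define tM where "tM = Max (range (($) ths))"
  have tm0: "tm > 0" unfolding tm_def by (rule thmin_pos[OF pos])
  have tmk: "tm \<le> ths$k" for k unfolding tm_def by (rule thmin_le)
  have tMk: "ths$k \<le> tM" for k unfolding tM_def by (rule thmax_ge)
  have C2e: "C2max ths = tM / tm^2" by (simp add: C2max_def tM_def tm_def)
  have C2g: "1 / tm \<le> C2max ths" unfolding tm_def by (rule C2_ge[OF pos])
  have C1g: "sqrt (ths$a) * sqrt (ths$b) / (ths$a)^2 \<le> C1max ths" for a b by (rule C1_bound[OF pos])
  have th0: "ths$k > 0" for k using pos by simp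
  have ypos: "y v > 0" if "v < V" for v
    unfolding y_def by (rule sum_pos) (use that phipos pos in auto)
  have yge: "ths$j * phi j v \<le> y v" if "v < V" for j v
    unfolding y_def by (rule member_le_sum) (use that phipos pos in \<open>auto intro: less_imp_le\<close>)
  have ysplit: "y v = ths$(kv v) * phi (kv v) v + (\<Sum>j\<in>UNIV - {kv v}. ths$j * phi j v)" for v
    unfolding y_def by (rule sum.remove) auto
  have rest: "(\<Sum>j\<in>UNIV - {kv v}. ths$j * phi j v) \<le> tM * (e * phi (kv v) v)" if "v < V" for v
  proof -
    have "(\<Sum>j\<in>UNIV - {kv v}. ths$j * phi j v) \<le> (\<Sum>j\<in>UNIV - {kv v}. tM * phi j v)"
      by (rule sum_mono) (use that phipos tMk in \<open>auto intro: mult_right_mono less_imp_le\<close>)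
    also have "\<dots> = tM * (\<Sum>j\<in>UNIV - {kv v}. phi j v)" by (simp add: sum_distrib_left)
    also have "\<dots> \<le> tM * (e * phi (kv v) v)"
      using sp[OF that] tMk[of "kv v"] th0[of "kv v"] unfolding kv_def by (intro mult_left_mono) auto
    finally show ?thesis .
  qed
  have phile: "phi j v \<le> e * phi (kv v) v" if "v < V" "j \<noteq> kv v" for j v
  proof -
    have "phi j v \<le> (\<Sum>j\<in>UNIV - {kv v}. phi j v)"
      by (rule member_le_sum) (use that phipos in \<open>auto intro: less_imp_le\<close>)
    thus ?thesis using sp[OF that(1)] unfolding kv_def by linarith
  qed
  have r_nn: "0 \<le> r j v" if "v < V" for j v
    unfolding r_def using that phipos ypos[OF that] by (auto intro: divide_nonneg_pos less_imp_le)
  have r_le: "r j v \<le> 1 / ths$j" if "v < V" for j v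
    unfolding r_def using yge[OF that, of j] ypos[OF that] th0[of j]
    by (simp add: divide_le_eq field_simps)
  have r_small: "r j v \<le> e / ths$(kv v)" if "v < V" "j \<noteq> kv v" for j v
  proof -
    have y1: "ths$(kv v) * phi (kv v) v \<le> y v" by (rule yge[OF that(1)])
    have pk: "phi (kv v) v > 0" using phipos that by simp
    have "r j v \<le> e * phi (kv v) v / y v"
      unfolding r_def using phile[OF that] ypos[OF that(1)] by (simp add: divide_right_mono)
    also have "\<dots> \<le> e * phi (kv v) v / (ths$(kv v) * phi (kv v) v)"
      using y1 pk th0[of "kv v"] e0 ypos[OF that(1)] by (intro divide_left_mono) auto
    also have "\<dots> = e / ths$(kv v)" using pk by simp
    finally show ?thesis .
  qed
  have etm: "e / ths$k \<le> e / tm" for k using tmk[of k] tm0 e0 by (intro divide_left_mono) auto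
  have Tdiag: "0 \<le> r i v * (1 - ths$i * r i v) \<and> r i v * (1 - ths$i * r i v) \<le> C2max ths * e" if v: "v < V" for v
  proof -
    have a1: "ths$i * r i v \<le> 1" using r_le[OF v, of i] th0[of i] by (simp add: field_simps)
    have a0: "0 \<le> r i v" by (rule r_nn[OF v])
    have nn: "0 \<le> r i v * (1 - ths$i * r i v)" using a0 a1 by simp
    have "r i v * (1 - ths$i * r i v) \<le> C2max ths * e"
    proof (cases "i = kv v")
      case True
      have "1 - ths$i * r i v = (y v - ths$i * phi i v) / y v"
        unfolding r_def using ypos[OF v] by (simp add: field_simps)
      also have "\<dots> \<le> tM * (e * phi i v) / y v"
        using rest[OF v] ysplit[of v] True ypos[OF v] by (intro divide_right_mono) auto
      also have "\<dots> = tM * e * r i v" by (simp add: r_def)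
      also have "\<dots> \<le> tM * e * (1 / ths$i)"
        using r_le[OF v, of i] tMk[of i] th0[of i] e0 by (intro mult_left_mono) auto
      finally have b: "1 - ths$i * r i v \<le> tM * e / ths$i" by simp
      have "r i v * (1 - ths$i * r i v) \<le> (1 / ths$i) * (tM * e / ths$i)"
        using r_le[OF v, of i] b a0 a1 th0[of i] by (intro mult_mono) auto
      also have "\<dots> = tM * e / (ths$i)^2" by (simp add: power2_eq_square)
      also have "\<dots> \<le> tM * e / tm^2"
        using tMk[of i] th0[of i] e0 tmk[of i] tm0 by (intro divide_left_mono power_mono) auto
      also have "\<dots> = C2max ths * e" by (simp add: C2e)
      finally show ?thesis .
    next
      case False
      have "r i v * (1 - ths$i * r i v) \<le> r i v * 1" using a0 th0[of i] r_nn[OF v, of i]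
        by (intro mult_left_mono) (auto intro: mult_nonneg_nonneg less_imp_le)
      also have "\<dots> \<le> e / tm" using r_small[OF v False] etm[of "kv v"] by simp
      also have "\<dots> = (1 / tm) * e" by simp
      also have "\<dots> \<le> C2max ths * e" using C2g e0 by (rule mult_right_mono)
      finally show ?thesis .
    qed
    with nn show ?thesis by simp
  qed
  have "sqrt (ths$i) * sqrt (ths$i) * (\<Sum>v<V. p v * (phi i v * phi i v / (\<Sum>k\<in>UNIV. ths$k * phi k v)^2)) - 1
      = (\<Sum>v<V. p v * (ths$i * r i v * r i v)) - (\<Sum>v<V. p v * r i v)"
  proof -
    have q: "sqrt (ths$i) * sqrt (ths$i) = ths$i" using th0[of i] by simp
    have "sqrt (ths$i) * sqrt (ths$i) * (\<Sum>v<V. p v * (phi i v * phi i v / (\<Sum>k\<in>UNIV. ths$k * phi k v)^2))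
       = (\<Sum>v<V. p v * (ths$i * r i v * r i v))"
      unfolding q sum_distrib_left by (rule sum.cong) (simp_all add: r_def y_def power2_eq_square mult_ac)
    moreover have "(\<Sum>v<V. p v * r i v) = 1" using kkt[of i] by (simp add: r_def y_def)
    ultimately show ?thesis by simp
  qed
  also have "\<dots> = - (\<Sum>v<V. p v * (r i v * (1 - ths$i * r i v)))"
    by (simp add: sum_negf[symmetric] sum_subtractf[symmetric] algebra_simps)
  finally have dE: "sqrt (ths$i) * sqrt (ths$i) * (\<Sum>v<V. p v * (phi i v * phi i v / (\<Sum>k\<in>UNIV. ths$k * phi k v)^2)) - 1
      = - (\<Sum>v<V. p v * (r i v * (1 - ths$i * r i v)))" .
  have "(\<Sum>v<V. p v * (r i v * (1 - ths$i * r i v))) \<le> (\<Sum>v<V. p v * (C2max ths * e))"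
    by (rule sum_mono) (use Tdiag pnn in \<open>auto intro: mult_left_mono\<close>)
  also have "\<dots> = C2max ths * e" using psum by (simp add: sum_distrib_right[symmetric])
  finally have d1: "(\<Sum>v<V. p v * (r i v * (1 - ths$i * r i v))) \<le> C2max ths * e" .
  have d0: "0 \<le> (\<Sum>v<V. p v * (r i v * (1 - ths$i * r i v)))"
    by (rule sum_nonneg) (use Tdiag pnn in auto)
  show "\<bar>sqrt (ths$i) * sqrt (ths$i) * (\<Sum>v<V. p v * (phi i v * phi i v / (\<Sum>k\<in>UNIV. ths$k * phi k v)^2)) - 1\<bar> \<le> C2max ths * e"
    unfolding dE using d0 d1 by simp
  assume ij: "i \<noteq> j"
  have Toff: "0 \<le> sqrt (ths$i) * sqrt (ths$j) * (r i v * r j v) \<and> sqrt (ths$i) * sqrt (ths$j) * (r i v * r j v) \<le> C1max ths * e + C2max ths * e^2" if v: "v < V" for v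
  proof -
    have s0: "0 \<le> sqrt (ths$i) * sqrt (ths$j)" using th0[of i] th0[of j] by (intro mult_nonneg_nonneg real_sqrt_ge_zero less_imp_le)
    have nn: "0 \<le> sqrt (ths$i) * sqrt (ths$j) * (r i v * r j v)" by (rule mult_nonneg_nonneg[OF s0 mult_nonneg_nonneg[OF r_nn[OF v] r_nn[OF v]]])
    have c1: "0 \<le> C1max ths * e" using C12_pos[OF pos] e0 by simp
    have c2: "0 \<le> C2max ths * e^2" using C12_pos[OF pos] e0 by simp
    have "sqrt (ths$i) * sqrt (ths$j) * (r i v * r j v) \<le> C1max ths * e + C2max ths * e^2"
    proof (cases "kv v = i")
      case True
      have "r i v * r j v \<le> (1 / ths$i) * (e / ths$i)"
        using r_le[OF v, of i] r_small[OF v, of j] ij True r_nn[OF v] e0 th0[of i] by (intro mult_mono) auto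
      hence "sqrt (ths$i) * sqrt (ths$j) * (r i v * r j v) \<le> sqrt (ths$i) * sqrt (ths$j) * ((1 / ths$i) * (e / ths$i))"
        using s0 by (rule mult_left_mono)
      also have "\<dots> = (sqrt (ths$i) * sqrt (ths$j) / (ths$i)^2) * e" by (simp add: power2_eq_square)
      also have "\<dots> \<le> C1max ths * e" using C1g[of i j] e0 by (rule mult_right_mono)
      finally show ?thesis using c2 by linarith
    next
      case False
      show ?thesis
      proof (cases "kv v = j")
        case True
        have "r i v * r j v \<le> (e / ths$j) * (1 / ths$j)"
          using r_le[OF v, of j] r_small[OF v, of i] ij True r_nn[OF v] e0 th0[of j] by (intro mult_mono) auto
        hence "sqrt (ths$i) * sqrt (ths$j) * (r i v * r j v) \<le> sqrt (ths$i) * sqrt (ths$j) * ((e / ths$j) * (1 / ths$j))"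
          using s0 by (rule mult_left_mono)
        also have "\<dots> = (sqrt (ths$j) * sqrt (ths$i) / (ths$j)^2) * e" by (simp add: power2_eq_square)
        also have "\<dots> \<le> C1max ths * e" using C1g[of j i] e0 by (rule mult_right_mono)
        finally show ?thesis using c2 by linarith
      next
        case False2: False
        have ri: "r i v \<le> e / tm" using r_small[OF v, of i] False etm[of "kv v"] by auto
        have rj: "r j v \<le> e / tm" using r_small[OF v, of j] False2 etm[of "kv v"] by auto
        have "r i v * r j v \<le> (e / tm) * (e / tm)"
          using ri rj r_nn[OF v] e0 tm0 by (intro mult_mono) auto
        moreover have "sqrt (ths$i) * sqrt (ths$j) \<le> tM"
        proof -
          have "sqrt (ths$i) * sqrt (ths$j) \<le> sqrt tM * sqrt tM"
            using tMk[of i] tMk[of j] th0[of i] th0[of j] by (intro mult_mono) (auto intro: less_imp_le)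
          also have "\<dots> = tM" using tMk[of i] th0[of i] by simp
          finally show ?thesis .
        qed
        ultimately have "sqrt (ths$i) * sqrt (ths$j) * (r i v * r j v) \<le> tM * ((e / tm) * (e / tm))"
          using s0 r_nn[OF v, of i] r_nn[OF v, of j] tMk[of i] th0[of i] by (intro mult_mono[where a="sqrt (ths$i) * sqrt (ths$j)"]) auto
        also have "\<dots> = C2max ths * e^2" by (simp add: C2e power2_eq_square)
        finally show ?thesis using c1 by linarith
      qed
    qed
    with nn show ?thesis by simp
  qed
  have oE: "sqrt (ths$i) * sqrt (ths$j) * (\<Sum>v<V. p v * (phi j v * phi i v / (\<Sum>k\<in>UNIV. ths$k * phi k v)^2))
      = (\<Sum>v<V. p v * (sqrt (ths$i) * sqrt (ths$j) * (r i v * r j v)))"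
    by (simp add: sum_distrib_left r_def y_def power2_eq_square mult.left_commute mult.commute)
  have "(\<Sum>v<V. p v * (sqrt (ths$i) * sqrt (ths$j) * (r i v * r j v))) \<le> (\<Sum>v<V. p v * (C1max ths * e + C2max ths * e^2))"
    by (rule sum_mono) (use Toff pnn in \<open>auto intro: mult_left_mono\<close>)
  also have "\<dots> = C1max ths * e + C2max ths * e^2" using psum by (simp add: sum_distrib_right[symmetric])
  also have "\<dots> \<le> e * (2 * C1max ths + C2max ths * e)" using C12_pos[OF pos] e0 by (simp add: algebra_simps power2_eq_square)
  finally have o1: "(\<Sum>v<V. p v * (sqrt (ths$i) * sqrt (ths$j) * (r i v * r j v))) \<le> e * (2 * C1max ths + C2max ths * e)" .
  have o0: "0 \<le> (\<Sum>v<V. p v * (sqrt (ths$i) * sqrt (ths$j) * (r i v * r j v)))"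
    by (rule sum_nonneg) (use Toff pnn in auto)
  show "\<bar>sqrt (ths$i) * sqrt (ths$j) * (\<Sum>v<V. p v * (phi j v * phi i v / (\<Sum>k\<in>UNIV. ths$k * phi k v)^2))\<bar> \<le> e * (2 * C1max ths + C2max ths * e)"
    unfolding oE using o0 o1 by simp
qed

lemma lin_sum: fixes th :: "real^'k"
  shows "(\<Sum>k\<in>UNIV. (th + s *\<^sub>R axis i 1 + t *\<^sub>R axis j 1) $ k * phi k v)
     = (\<Sum>k\<in>UNIV. th$k * phi k v) + s * phi i v + t * phi j v"
proof -
  have "(\<Sum>k\<in>UNIV. (th + s *\<^sub>R axis i 1 + t *\<^sub>R axis j 1) $ k * phi k v)
     = (\<Sum>k\<in>UNIV. th$k * phi k v + (if k = i then s * phi k v else 0) + (if k = j then t * phi k v else 0))"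
    by (rule sum.cong) (auto simp: axis_def algebra_simps)
  also have "\<dots> = (\<Sum>k\<in>UNIV. th$k * phi k v) + s * phi i v + t * phi j v"
    by (simp add: sum.distrib)
  finally show ?thesis .
qed

lemma deriv_ln_lin: fixes a b :: real assumes "a > 0"
  shows "((\<lambda>t. ln (a + t * b)) has_real_derivative (b / a)) (at 0)"
proof -
  have d1: "DERIV ln (a + 0 * b) :> 1 / a" using DERIV_ln_divide[of a] assms by simp
  have d2: "((\<lambda>t. a + t * b) has_real_derivative b) (at 0)"
    by (auto intro!: derivative_eq_intros)
  show ?thesis using DERIV_chain2[OF d1 d2] by simp
qed

lemma deriv_sum_ln:
  fixes a b :: "nat \<Rightarrow> real"
  assumes "\<forall>v<V. a v > 0"
  shows "((\<lambda>t. \<Sum>v<V. p v * ln (a v + t * b v)) has_real_derivative (\<Sum>v<V. p v * (b v / a v))) (at 0)"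
  by (rule DERIV_sum, rule DERIV_cmult, rule deriv_ln_lin) (use assms in auto)

lemma ev_pos: fixes y b :: real assumes "y > 0"
  shows "eventually (\<lambda>s. y + s * b > 0) (nhds 0)"
proof -
  have "((\<lambda>s. y + s * b) \<longlongrightarrow> y + 0 * b) (nhds 0)"
    by (intro tendsto_intros filterlim_ident)
  thus ?thesis using order_tendstoD(1)[of "\<lambda>s. y + s * b" "y + 0 * b" "nhds 0" 0] assms by simp
qed

lemma hess_eq:
  fixes ths :: "real^'k"
  assumes ypos: "\<forall>v<V. (\<Sum>k\<in>UNIV. ths$k * phi k v) > 0"
  shows "hessian (Hobj V p phi) ths $ i $ j = - (\<Sum>v<V. p v * (phi j v * phi i v / (\<Sum>k\<in>UNIV. ths$k * phi k v)^2))"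
proof -
  define y where "y v = (\<Sum>k\<in>UNIV. ths$k * phi k v)" for v
  have H: "Hobj V p phi (ths + s *\<^sub>R axis i 1 + t *\<^sub>R axis j 1) = (\<Sum>v<V. p v * ln ((y v + s * phi i v) + t * phi j v))" for s t
    unfolding Hobj_def y_def lin_sum by (simp add: add.assoc)
  have ev: "eventually (\<lambda>s. \<forall>v\<in>{..<V}. y v + s * phi i v > 0) (nhds 0)"
    by (rule eventually_ball_finite) (use ypos in \<open>auto simp: y_def intro!: ev_pos\<close>)
  have inner: "deriv (\<lambda>t. Hobj V p phi (ths + s *\<^sub>R axis i 1 + t *\<^sub>R axis j 1)) 0 = (\<Sum>v<V. p v * (phi j v / (y v + s * phi i v)))"
    if "\<forall>v\<in>{..<V}. y v + s * phi i v > 0" for s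
    unfolding H by (rule DERIV_imp_deriv, rule deriv_sum_ln) (use that in auto)
  have ev2: "eventually (\<lambda>s. deriv (\<lambda>t. Hobj V p phi (ths + s *\<^sub>R axis i 1 + t *\<^sub>R axis j 1)) 0 = (\<Sum>v<V. p v * (phi j v / (y v + s * phi i v)))) (nhds 0)"
    using ev by (rule eventually_mono) (rule inner)
  have D: "((\<lambda>s. \<Sum>v<V. p v * (phi j v / (y v + s * phi i v))) has_real_derivative (\<Sum>v<V. p v * (- (phi j v * phi i v / (y v)^2)))) (at 0)"
  proof (rule DERIV_sum, rule DERIV_cmult)
    fix v assume "v \<in> {..<V}"
    hence yv: "y v > 0" using ypos by (simp add: y_def)
    show "((\<lambda>s. phi j v / (y v + s * phi i v)) has_real_derivative (- (phi j v * phi i v / (y v)^2))) (at 0)"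
      using yv by (auto intro!: derivative_eq_intros simp: power2_eq_square)
  qed
  have "hessian (Hobj V p phi) ths $ i $ j = deriv (\<lambda>s. deriv (\<lambda>t. Hobj V p phi (ths + s *\<^sub>R axis i 1 + t *\<^sub>R axis j 1)) 0) 0"
    by (simp add: hessian_def)
  also have "\<dots> = deriv (\<lambda>s. \<Sum>v<V. p v * (phi j v / (y v + s * phi i v))) 0"
    by (rule deriv_cong_ev[OF ev2 refl])
  also have "\<dots> = (\<Sum>v<V. p v * (- (phi j v * phi i v / (y v)^2)))"
    by (rule DERIV_imp_deriv[OF D])
  finally show ?thesis by (simp add: y_def sum_negf)
qed

lemma kkt:
  fixes ths :: "real^'k"
  assumes pos: "\<forall>k. ths$k > 0" and sx: "ths \<in> simplexK"
    and ypos: "\<forall>v<V. (\<Sum>k\<in>UNIV. ths$k * phi k v) > 0"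
    and psum: "(\<Sum>v<V. p v) = 1"
    and max: "\<forall>th\<in>simplexK. Hobj V p phi th \<le> Hobj V p phi ths"
  shows "(\<Sum>v<V. p v * (phi k v / (\<Sum>k\<in>UNIV. ths$k * phi k v))) = 1"
proof -
  define y where "y v = (\<Sum>k\<in>UNIV. ths$k * phi k v)" for v
  define g where "g k = (\<Sum>v<V. p v * (phi k v / y v))" for k
  have geq: "g i = g j" for i j
  proof (cases "i = j")
    case True thus ?thesis by simp
  next
    case False
    define d where "d = min (ths$i) (ths$j)"
    have d0: "d > 0" using pos by (simp add: d_def)
    define f where "f t = Hobj V p phi (ths + t *\<^sub>R axis i 1 + (-t) *\<^sub>R axis j 1)" for t
    have fe: "f t = (\<Sum>v<V. p v * ln (y v + t * (phi i v - phi j v)))" for t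
      unfolding f_def Hobj_def lin_sum y_def by (simp add: algebra_simps)
    have D: "(f has_real_derivative (\<Sum>v<V. p v * ((phi i v - phi j v) / y v))) (at 0)"
      unfolding fe[abs_def] by (rule deriv_sum_ln) (use ypos in \<open>auto simp: y_def\<close>)
    have le: "\<forall>t. \<bar>0 - t\<bar> < d \<longrightarrow> f t \<le> f 0"
    proof (intro allI impI)
      fix t assume t: "\<bar>0 - t\<bar> < d"
      have "ths + t *\<^sub>R axis i 1 + (-t) *\<^sub>R axis j 1 \<in> simplexK"
        unfolding simplexK_def
      proof safe
        fix k
        have "ths$k + (if k = i then t else 0) + (if k = j then -t else 0) \<ge> 0"
          using t False pos[rule_format, of k] unfolding d_def by (auto simp: abs_less_iff)
        moreover have "(ths + t *\<^sub>R axis i 1 + (-t) *\<^sub>R axis j 1) $ k = ths$k + (if k = i then t else 0) + (if k = j then -t else 0)"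
          by (auto simp: axis_def)
        ultimately show "0 \<le> (ths + t *\<^sub>R axis i 1 + (-t) *\<^sub>R axis j 1) $ k" by simp
      next
        have "(\<Sum>k\<in>UNIV. (ths + t *\<^sub>R axis i 1 + (-t) *\<^sub>R axis j 1) $ k)
          = (\<Sum>k\<in>UNIV. ths$k + (if k = i then t else 0) + (if k = j then -t else 0))"
          by (rule sum.cong) (auto simp: axis_def)
        also have "\<dots> = (\<Sum>k\<in>UNIV. ths$k)" by (simp add: sum.distrib)
        also have "\<dots> = 1" using sx by (simp add: simplexK_def)
        finally show "(\<Sum>k\<in>UNIV. (ths + t *\<^sub>R axis i 1 + (-t) *\<^sub>R axis j 1) $ k) = 1" .
      qed
      hence "f t \<le> Hobj V p phi ths" using max by (simp add: f_def)
      thus "f t \<le> f 0" by (simp add: f_def)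
    qed
    have "(\<Sum>v<V. p v * ((phi i v - phi j v) / y v)) = 0"
      by (rule DERIV_local_max[OF D d0 le])
    hence "g i - g j = 0" unfolding g_def
      by (simp add: sum_subtractf[symmetric] diff_divide_distrib right_diff_distrib)
    thus ?thesis by simp
  qed
  have "(\<Sum>k\<in>UNIV. ths$k * g k) = (\<Sum>v<V. \<Sum>k\<in>UNIV. p v * (ths$k * phi k v) / y v)"
    unfolding g_def by (simp add: sum_distrib_left sum.swap[of _ UNIV] algebra_simps)
  also have "\<dots> = (\<Sum>v<V. p v * y v / y v)"
    by (simp add: sum_divide_distrib[symmetric] sum_distrib_left[symmetric] y_def)
  also have "\<dots> = (\<Sum>v<V. p v)" using ypos by (intro sum.cong) (auto simp: y_def)
  finally have s1: "(\<Sum>k\<in>UNIV. ths$k * g k) = 1" using psum by simp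
  have "(\<Sum>k'\<in>UNIV. ths$k' * g k') = (\<Sum>k'\<in>UNIV. ths$k' * g k)" by (rule sum.cong) (use geq in auto)
  also have "\<dots> = g k" using sx by (simp add: simplexK_def sum_distrib_right[symmetric])
  finally have "g k = 1" using s1 by simp
  thus ?thesis by (simp add: g_def y_def)
qed

lemma sum_if_delta: fixes b c :: "'n::finite \<Rightarrow> real"
  shows "(\<Sum>k\<in>UNIV. (if i = k then c k else 0) * b k) = c i * b i"
proof -
  have "(\<Sum>k\<in>UNIV. (if i = k then c k else 0) * b k) = (\<Sum>k\<in>UNIV. if i = k then c k * b k else 0)"
    by (rule sum.cong) auto
  thus ?thesis by simp
qed

lemma sum_if_delta2: fixes b c :: "'n::finite \<Rightarrow> real"
  shows "(\<Sum>k\<in>UNIV. b k * (if k = j then c k else 0)) = b j * c j"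
proof -
  have "(\<Sum>k\<in>UNIV. b k * (if k = j then c k else 0)) = (\<Sum>k\<in>UNIV. if k = j then b k * c k else 0)"
    by (rule sum.cong) auto
  thus ?thesis by simp
qed

lemma diag_sandwich: fixes X :: "real^'n^'n"
  shows "((\<chi> i j. if i = j then d i else 0) ** X ** (\<chi> i j. if i = j then d i else 0)) $ i $ j = d i * X$i$j * d j"
proof -
  have L: "((\<chi> i j. if i = j then d i else 0) ** X) = (\<chi> i j. d i * X$i$j)"
    by (simp add: matrix_matrix_mult_def vec_eq_iff sum_if_delta)
  show ?thesis unfolding L
    by (simp add: matrix_matrix_mult_def sum_if_delta2)
qed

lemma det_negm: fixes X :: "real^'n^'n"
  shows "det (\<chi> i j. - (X$i$j)) = (-1)^CARD('n) * det X"
proof -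
  have eq: "(\<chi> i j. - (X$i$j)) = (\<chi> i. (\<lambda>_. -1::real) i *s X$i)"
    by (simp add: vec_eq_iff)
  have "det (\<chi> i j. - (X$i$j)) = prod (\<lambda>_. -1::real) (UNIV::'n set) * det (\<chi> i. X$i)"
    unfolding eq using det_rows_mul[of "\<lambda>_. -1::real" "\<lambda>i. X$i"] by simp
  thus ?thesis by simp
qed

lemma det_diag_pos: fixes d :: "'n::finite \<Rightarrow> real" assumes "\<forall>i. d i > 0"
  shows "det ((\<chi> i j. if i = j then d i else 0) :: real^'n^'n) > 0"
proof -
  have "det ((\<chi> i j. if i = j then d i else 0) :: real^'n^'n) = (\<Prod>i\<in>UNIV. d i)"
    by (subst det_diagonal) auto
  thus ?thesis using assms by (simp add: prod_pos)
qed

theorem theorem6: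
  fixes ths :: "real^'k"
  assumes "CARD('k) > 3"
    and "ths \<in> simplexK"
    and "\<forall>k. ths $ k > 0"
  shows "\<exists>C>0. \<forall>(V::nat) (phi::'k \<Rightarrow> nat \<Rightarrow> real) (p::nat \<Rightarrow> real).
           V \<ge> 1 \<and> (\<forall>k. prob_vec V (phi k)) \<and> (\<forall>k v. v < V \<longrightarrow> phi k v > 0)
           \<and> prob_vec V p
           \<and> (\<forall>th\<in>simplexK. Hobj V p phi th \<le> Hobj V p phi ths)
           \<and> B1 V phi \<and> sparsity V phi < eps0 ths
           \<longrightarrow> rho2 (hessian (Hobj V p phi) ths) (Rmat ths) \<ge> exp (- (C^2 * (sparsity V phi)^2))"
proof -
  have pos: "\<forall>k. ths$k > 0" using assms(3) .
  have th0: "ths$k > 0" for k using pos by simp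
  define e0 where "e0 = eps0 ths"
  have E0: "e0 > 0 \<and> e0 * sqrt (Ffun ths e0) = 1/2" unfolding e0_def by (rule eps0_prop[OF pos])
  have c2: "C2max ths > 0" using C12_pos[OF pos] by simp
  have "4 * (C2max ths)^2 * real CARD('k) > 0" using c2 K1[where 'k='k] by simp
  hence Fpos: "Ffun ths e0 > 0" using F_pos[OF pos, of e0] by linarith
  define C where "C = sqrt (real CARD('k) * Ffun ths e0)"
  have CC: "C^2 = real CARD('k) * Ffun ths e0" unfolding C_def using Fpos by simp
  have Cpos: "C > 0" unfolding C_def using Fpos K1[where 'k='k] by simp
  show ?thesis
  proof (rule exI[of _ C], intro conjI allI impI)
    show "C > 0" by (rule Cpos)
    fix V :: nat and phi :: "'k \<Rightarrow> nat \<Rightarrow> real" and p :: "nat \<Rightarrow> real"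
    assume H: "V \<ge> 1 \<and> (\<forall>k. prob_vec V (phi k)) \<and> (\<forall>k v. v < V \<longrightarrow> phi k v > 0)
           \<and> prob_vec V p
           \<and> (\<forall>th\<in>simplexK. Hobj V p phi th \<le> Hobj V p phi ths)
           \<and> B1 V phi \<and> sparsity V phi < eps0 ths"
    have V1: "V \<ge> 1" using H by simp
    have phipos: "\<forall>k v. v < V \<longrightarrow> phi k v > 0" using H by simp
    have pnn: "\<forall>v<V. p v \<ge> 0" and psum: "(\<Sum>v<V. p v) = 1" using H by (simp_all add: prob_vec_def)
    have max: "\<forall>th\<in>simplexK. Hobj V p phi th \<le> Hobj V p phi ths" using H by simp
    define e where "e = sparsity V phi"
    have ee0: "e < e0" using H by (simp add: e_def e0_def)
    define ratio where "ratio v = (\<Sum>j\<in>UNIV - {kmax phi v}. phi j v) / phi (kmax phi v) v" for v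
    have rat_le: "ratio v \<le> e" if "v < V" for v
      unfolding e_def sparsity_def ratio_def by (rule Max_ge) (use that in auto)
    have sp: "(\<Sum>j\<in>UNIV - {kmax phi v}. phi j v) \<le> e * phi (kmax phi v) v" if "v < V" for v
    proof -
      have "phi (kmax phi v) v > 0" using phipos that by simp
      thus ?thesis using rat_le[OF that] unfolding ratio_def by (simp add: divide_le_eq)
    qed
    have e_nn: "e \<ge> 0"
    proof -
      have "0 \<le> ratio 0" unfolding ratio_def using phipos V1
        by (intro divide_nonneg_nonneg sum_nonneg) (auto intro: less_imp_le)
      thus ?thesis using rat_le[of 0] V1 by simp
    qed
    have ypos: "\<forall>v<V. (\<Sum>k\<in>UNIV. ths$k * phi k v) > 0"
      using phipos pos by (auto intro!: sum_pos)
    have kkt: "(\<Sum>v<V. p v * (phi k v / (\<Sum>k\<in>UNIV. ths$k * phi k v))) = 1" for k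
      by (rule kkt[OF pos assms(2) ypos psum max])
    define A where "A i j = (\<Sum>v<V. p v * (phi j v * phi i v / (\<Sum>k\<in>UNIV. ths$k * phi k v)^2))" for i j
    have HQ: "hessian (Hobj V p phi) ths $ i $ j = - A i j" for i j
      unfolding A_def by (rule hess_eq[OF ypos])
    have Asym: "A i j = A j i" for i j unfolding A_def by (simp add: mult.commute)
    define sq where "sq k = sqrt (ths$k)" for k
    have sq0: "sq k > 0" for k using th0 by (simp add: sq_def)
    have sqnz[simp]: "sq k \<noteq> 0" for k using sq0[of k] by simp
    have sqsq: "sq k * sq k = ths$k" for k using th0[of k] by (simp add: sq_def)
    have thnz[simp]: "ths$k \<noteq> 0" for k using th0[of k] by simp
    define E :: "real^'k^'k" where "E = (\<chi> i j. sq i * sq j * A i j - (if i = j then 1 else 0))"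
    have Esym: "E$i$j = E$j$i" for i j unfolding E_def by (simp add: Asym mult.commute)
    have Ediag: "\<bar>E$i$i\<bar> \<le> C2max ths * e" for i
      using entry_bounds(1)[OF pos phipos pnn psum kkt sp e_nn, of i] by (simp add: E_def A_def sq_def)
    have Eoff: "\<bar>E$i$j\<bar> \<le> e * (2 * C1max ths + C2max ths * e)" if "i \<noteq> j" for i j
      using entry_bounds(2)[OF pos phipos pnn psum kkt sp e_nn that] that by (simp add: E_def A_def sq_def)
    define FF where "FF = (\<Sum>i\<in>UNIV. \<Sum>j\<in>UNIV. (E$i$j)^2)"
    have FFle: "FF \<le> e^2 * Ffun ths e"
    proof -
      let ?b = "e * (2 * C1max ths + C2max ths * e)"
      have row: "(\<Sum>j\<in>UNIV. (E$i$j)^2) \<le> (C2max ths * e)^2 + (real CARD('k) - 1) * ?b^2" for i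
      proof -
        have "(\<Sum>j\<in>UNIV. (E$i$j)^2) = (E$i$i)^2 + (\<Sum>j\<in>UNIV - {i}. (E$i$j)^2)"
          by (rule sum.remove) auto
        also have "(E$i$i)^2 \<le> (C2max ths * e)^2"
          using Ediag[of i] by (metis abs_le_square_iff abs_mult abs_of_nonneg c2 e_nn less_imp_le mult_nonneg_nonneg power2_abs)
        also have "(\<Sum>j\<in>UNIV - {i}. (E$i$j)^2) \<le> (\<Sum>j\<in>UNIV - {i}. ?b^2)"
        proof (rule sum_mono)
          fix j assume "j \<in> UNIV - {i}"
          hence "\<bar>E$i$j\<bar> \<le> ?b" using Eoff[of i j] by auto
          hence "\<bar>E$i$j\<bar>^2 \<le> ?b^2" by (intro power_mono) auto
          thus "(E$i$j)^2 \<le> ?b^2" by simp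
        qed
        also have "\<dots> = (real CARD('k) - 1) * ?b^2"
          by (simp add: card_Diff_singleton of_nat_diff Suc_le_eq)
        finally show ?thesis by simp
      qed
      have "FF \<le> (\<Sum>i\<in>(UNIV::'k set). (C2max ths * e)^2 + (real CARD('k) - 1) * ?b^2)"
        unfolding FF_def by (rule sum_mono) (rule row)
      also have "\<dots> = real CARD('k) * (C2max ths)^2 * e^2 + real CARD('k) * (real CARD('k) - 1) * e^2 * (2 * C1max ths + C2max ths * e)^2"
      proof -
        have bsq: "?b^2 = e^2 * (2 * C1max ths + C2max ths * e)^2" by (simp add: power_mult_distrib)
        have "(\<Sum>i\<in>(UNIV::'k set). (C2max ths * e)^2 + (real CARD('k) - 1) * ?b^2) = real CARD('k) * ((C2max ths * e)^2 + (real CARD('k) - 1) * ?b^2)"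
          by simp
        also have "\<dots> = real CARD('k) * (C2max ths)^2 * e^2 + real CARD('k) * (real CARD('k) - 1) * e^2 * (2 * C1max ths + C2max ths * e)^2"
          unfolding bsq by (simp add: power_mult_distrib distrib_left mult.assoc mult.left_commute)
        finally show ?thesis .
      qed
      also have "\<dots> \<le> e^2 * Ffun ths e"
      proof -
        have "real CARD('k) * (C2max ths)^2 * e^2 \<le> 4 * (C2max ths)^2 * real CARD('k) * e^2"
          by simp
        thus ?thesis unfolding Ffun_def by (simp add: algebra_simps)
      qed
      finally show ?thesis .
    qed
    have FF0: "FF \<ge> 0" unfolding FF_def by (intro sum_nonneg) auto
    have gle: "e * sqrt (Ffun ths e) < 1/2"
      using g_strict[OF pos e_nn ee0] E0 by simp
    have "4 * (C2max ths)^2 * real CARD('k) \<ge> 0" by simp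
    hence Fe0: "Ffun ths e \<ge> 0" using F_pos[OF pos, of e] by linarith
    have "e^2 * Ffun ths e = (e * sqrt (Ffun ths e))^2" using Fe0 by (simp add: power_mult_distrib)
    also have "\<dots> < (1/2)^2" using gle e_nn Fe0 by (intro power_strict_mono) auto
    finally have lt: "e^2 * Ffun ths e < (1/2)^2" .
    have "FF < (1/2)^2" using FFle lt by linarith
    hence "sqrt FF \<le> sqrt ((1/2)^2)" by (intro real_sqrt_le_mono) simp
    hence fhalf: "sqrt FF \<le> 1/2" by simp
    have "e^2 * Ffun ths e \<le> e^2 * Ffun ths e0"
      using F_mono[OF pos e_nn less_imp_le[OF ee0]] by (intro mult_left_mono) auto
    hence FFC: "FF \<le> e^2 * Ffun ths e0" using FFle by linarith
    obtain n \<mu> where nK: "n \<le> CARD('k)" and mub: "\<forall>i<n. \<bar>\<mu> i\<bar> \<le> sqrt FF"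
      and detf: "\<forall>t::real. det ((\<chi> i j. (if i = j then 1 else 0) + t * E$i$j) :: real^'k^'k) = (\<Prod>i<n. 1 + t * \<mu> i)"
      using sym_det_factor[of E] Esym unfolding FF_def by blast
    define Dm :: "real^'k^'k" where "Dm = (\<chi> i j. if i = j then 1 / sq i else 0)"
    have dD: "det Dm > 0" unfolding Dm_def by (rule det_diag_pos) (use sq0 in simp)
    define X1 :: "real^'k^'k" where "X1 = (\<chi> i j. (if i = j then 1 else 0) + 1 * E$i$j)"
    define X2 :: "real^'k^'k" where "X2 = (\<chi> i j. (if i = j then 1 else 0) + (1/2) * E$i$j)"
    have Qeq: "hessian (Hobj V p phi) ths = Dm ** (\<chi> i j. - (X1$i$j)) ** Dm"
      unfolding Dm_def X1_def
      by (simp add: vec_eq_iff diag_sandwich HQ E_def)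
    have Req: "Rmat ths = Dm ** (\<chi> i j. - ((mat 1 :: real^'k^'k)$i$j)) ** Dm"
      unfolding Dm_def Rmat_def
      using sqsq by (auto simp: vec_eq_iff diag_sandwich mat_def field_simps)
    have Seq: "(1/2) *\<^sub>R (hessian (Hobj V p phi) ths + Rmat ths) = Dm ** (\<chi> i j. - (X2$i$j)) ** Dm"
      unfolding Dm_def X2_def Rmat_def
      using sqsq by (auto simp: vec_eq_iff diag_sandwich HQ E_def field_simps)
    define P1 where "P1 = (\<Prod>i<n. 1 + \<mu> i)"
    define P2 where "P2 = (\<Prod>i<n. 1 + \<mu> i / 2)"
    have dX1: "det X1 = P1" unfolding X1_def P1_def using detf[rule_format, of 1] by simp
    have dX2: "det X2 = P2" unfolding X2_def P2_def using detf[rule_format, of "1/2"] by simp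
    have mu_half: "\<bar>\<mu> i\<bar> \<le> 1/2" if "i < n" for i using mub that fhalf by force
    have mu_lo: "- (1/2) \<le> \<mu> i" if "i < n" for i using mu_half[OF that] by (simp add: abs_le_iff)
    have P1pos: "P1 > 0" unfolding P1_def
    proof (rule prod_pos)
      fix i assume "i \<in> {..<n}" thus "0 < 1 + \<mu> i" using mu_lo[of i] by simp
    qed
    have P2pos: "P2 > 0" unfolding P2_def
    proof (rule prod_pos)
      fix i assume "i \<in> {..<n}" thus "0 < 1 + \<mu> i / 2" using mu_lo[of i] by simp
    qed
    let ?s = "(-1::real)^CARD('k)"
    have as: "\<bar>?s\<bar> = 1" by simp
    have dQ: "\<bar>det (hessian (Hobj V p phi) ths)\<bar> = det Dm * det Dm * P1"
      unfolding Qeq det_mul det_negm dX1 using dD P1pos by (simp add: abs_mult)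
    have dR: "\<bar>det (Rmat ths)\<bar> = det Dm * det Dm"
      unfolding Req det_mul det_negm using dD by (simp add: abs_mult)
    have dS: "\<bar>det ((1/2) *\<^sub>R (hessian (Hobj V p phi) ths + Rmat ths))\<bar> = det Dm * det Dm * P2"
      unfolding Seq det_mul det_negm dX2 using dD P2pos by (simp add: abs_mult)
    have rho: "rho2 (hessian (Hobj V p phi) ths) (Rmat ths) = sqrt P1 / P2"
      unfolding rho2_def dQ dR dS using dD P1pos P2pos by (simp add: real_sqrt_mult)
    have "exp (- (real n * (sqrt FF)^2)) \<le> sqrt P1 / P2"
      unfolding P1_def P2_def by (rule prod_ratio_ge) (use mub fhalf in auto)
    moreover have "exp (- (C^2 * (sparsity V phi)^2)) \<le> exp (- (real n * (sqrt FF)^2))"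
    proof -
      have "real n * (sqrt FF)^2 = real n * FF" using FF0 by simp
      also have "\<dots> \<le> real CARD('k) * FF" using nK FF0 by (intro mult_right_mono) auto
      also have "\<dots> \<le> real CARD('k) * (e^2 * Ffun ths e0)" using FFC by (intro mult_left_mono) auto
      also have "\<dots> = C^2 * (sparsity V phi)^2" unfolding CC e_def by simp
      finally show ?thesis by simp
    qed
    ultimately show "rho2 (hessian (Hobj V p phi) ths) (Rmat ths) \<ge> exp (- (C^2 * (sparsity V phi)^2))"
      unfolding rho by linarith
  qed
qed

end
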